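(* Let $X$, $Y$, $Z$ be positive, absolutely continuous random variables with densities $f_X$, $f_Y$, $f_Z$, such that $X$ and $Y$ are independent and $Z \stackrel{d}{=} X/(X+Y)$ (so $Z$ takes values in $(0,1)$). Suppose that the density of $Y$ admits the decomposition $$f_Y(sx)=\mathbb{A}(s)\,\mathbb{B}(x)\,\mathbb{C}(sx),\qquad x,s>0,$$ for some positive real-valued functions $\mathbb{A},\mathbb{B},\mathbb{C}$ on $(0,\infty)$, where $$\mathbb{C}(x)=(1+\theta x)^{-p},\qquad x>0,$$ for some constants $\theta,p>0$. Then the density of $X$ is given, for $x>0$, by $$f_X(x)=\frac{\Gamma(p)}{x\,\mathbb{B}(x)}\;\mathcal{L}^{-1}\left\{ t^{1-p}\,\mathcal{L}^{-1}\left\{\frac{1}{s^{p}\,\mathbb{A}\!\left(\frac{1}{\theta s}\right)}\left(\frac{\theta s}{1+\theta s}\right)^2 f_Z\!\left(\frac{\theta s}{1+\theta s}\right)\right\}(t)\right\}(x).$$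
   Context: $\mathcal{L}$ denotes the Laplace transform, $\mathcal{L}\{g\}(s)=\int_0^\infty e^{-st}g(t)\,\mathrm{d}t$, and $\mathcal{L}^{-1}$ denotes the inverse Laplace transform: $\mathcal{L}^{-1}\{F\}$ is the function $g$ on $(0,\infty)$ with $\mathcal{L}\{g\}=F$. In the formula, the inner inverse Laplace transform is taken in the variable $s$ and evaluated at $t$, and the outer one is taken in the variable $t$ and evaluated at $x$. $\Gamma$ is the gamma function and $\stackrel{d}{=}$ means equality in distribution. *)

theory Defs
  imports "HOL-Probability.Probability"
begin

definition laplace :: "(real \<Rightarrow> real) \<Rightarrow> real \<Rightarrow> real" where
  "laplace g s = (LINT t:{0<..}|lborel. exp (- s * t) * g t)"

text \<open>g is an inverse Laplace transform of F: g is a Borel function on (0,inf) whose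
  Laplace integral converges (absolutely) for every s > 0 and L{g} = F
  (almost everywhere on (0,inf), since F may be built from densities, which are
  only determined up to null sets).\<close>
definition is_inv_laplace :: "(real \<Rightarrow> real) \<Rightarrow> (real \<Rightarrow> real) \<Rightarrow> bool" where
  "is_inv_laplace F g \<longleftrightarrow>
     g \<in> borel_measurable borel \<and>
     (\<forall>s>0. set_integrable lborel {0<..} (\<lambda>t. exp (- s * t) * g t)) \<and>
     (AE s in lborel. s > 0 \<longrightarrow> laplace g s = F s)"

end

theory Submission
  imports Defs
begin


lemma nn_subst:
  fixes f g g' :: "real \<Rightarrow> real"
  assumes S[measurable]: "S \<in> sets borel" and gS[measurable]: "g ` S \<in> sets borel"
    and der: "\<And>x. x \<in> S \<Longrightarrow> (g has_real_derivative g' x) (at x)"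
    and inj: "inj_on g S"
    and [measurable]: "f \<in> borel_measurable borel" "g \<in> borel_measurable borel" "g' \<in> borel_measurable borel"
    and nn: "\<And>x. f x \<ge> 0"
  shows "(\<integral>\<^sup>+x. ennreal (f x) * indicator (g ` S) x \<partial>lborel) =
         (\<integral>\<^sup>+x. ennreal (\<bar>g' x\<bar> * f (g x)) * indicator S x \<partial>lborel)"
proof -
  define fn where "fn n y = min (f y) (real n) * indicator {- real n..real n} y" for n :: nat and y
  have fn_m[measurable]: "fn n \<in> borel_measurable borel" for n unfolding fn_def by measurable
  have fn_nn: "fn n y \<ge> 0" for n y unfolding fn_def using nn by (auto simp: indicator_def)
  have fin: "(\<integral>\<^sup>+x. ennreal (fn n x) * indicator (g ` S) x \<partial>lborel) =
         (\<integral>\<^sup>+x. ennreal (\<bar>g' x\<bar> * fn n (g x)) * indicator S x \<partial>lborel)" for n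
  proof -
    have int1: "set_integrable lborel (g ` S) (fn n)"
      unfolding set_integrable_def
    proof (rule Bochner_Integration.integrable_bound[where f="\<lambda>y. real n * indicator {- real n..real n} y"])
      show "integrable lborel (\<lambda>y. real n * indicator {- real n..real n} y :: real)"
        by (intro integrable_mult_right integrable_real_indicator) auto
      show "AE x in lborel. norm (indicator (g ` S) x *\<^sub>R fn n x) \<le> norm (real n * indicator {- real n..real n} x :: real)"
        using nn by (auto simp: fn_def indicator_def)
      show "(\<lambda>x. indicat_real (g ` S) x *\<^sub>R fn n x) \<in> borel_measurable lborel" by measurable
    qed
    hence ai: "fn n absolutely_integrable_on (g ` S)"
      unfolding set_integrable_def by (subst integrable_completion) auto
    have der': "\<And>x. x \<in> S \<Longrightarrow> (g has_field_derivative g' x) (at x within S)"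
      using der by (auto intro: has_field_derivative_at_within)
    from has_absolute_integral_change_of_variables_1'[OF _ der' inj, of "fn n" "integral (g ` S) (fn n)"] ai
    have ai2: "(\<lambda>x. \<bar>g' x\<bar> * fn n (g x)) absolutely_integrable_on S"
      and eq: "integral S (\<lambda>x. \<bar>g' x\<bar> * fn n (g x)) = integral (g ` S) (fn n)"
      by auto
    have int2: "set_integrable lborel S (\<lambda>x. \<bar>g' x\<bar> * fn n (g x))"
      using ai2 unfolding set_integrable_def by (subst (asm) integrable_completion) auto
    have "(\<integral>\<^sup>+x. ennreal (fn n x) * indicator (g ` S) x \<partial>lborel) = ennreal (LINT x:g ` S|lborel. fn n x)"
      using int1 fn_nn unfolding set_integrable_def set_lebesgue_integral_def
      by (subst nn_integral_eq_integral[symmetric]) (auto intro!: nn_integral_cong simp: indicator_def)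
    also have "\<dots> = ennreal (integral (g ` S) (fn n))"
      using set_borel_integral_eq_integral(2)[OF int1] by simp
    also have "\<dots> = ennreal (LINT x:S|lborel. \<bar>g' x\<bar> * fn n (g x))"
      using set_borel_integral_eq_integral(2)[OF int2] eq by simp
    also have "\<dots> = (\<integral>\<^sup>+x. ennreal (\<bar>g' x\<bar> * fn n (g x)) * indicator S x \<partial>lborel)"
      using int2 fn_nn unfolding set_integrable_def set_lebesgue_integral_def
      by (subst nn_integral_eq_integral[symmetric]) (auto intro!: nn_integral_cong simp: indicator_def)
    finally show ?thesis .
  qed
  have ev: "eventually (\<lambda>n. fn n y = f y) sequentially" for y
    using eventually_ge_at_top[of "nat \<lceil>max (f y) \<bar>y\<bar>\<rceil>"]
  proof eventually_elim
    case (elim n)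
    have "max (f y) \<bar>y\<bar> \<le> real (nat \<lceil>max (f y) \<bar>y\<bar>\<rceil>)" by (rule real_nat_ceiling_ge)
    also have "\<dots> \<le> real n" using elim by (simp only: of_nat_le_iff)
    finally have "max (f y) \<bar>y\<bar> \<le> real n" .
    thus ?case by (auto simp: fn_def indicator_def min_def)
  qed
  have inc: "fn m y \<le> fn n y" if "m \<le> n" for m n y
    using that nn unfolding fn_def by (auto simp: indicator_def min_def)
  have L1: "(\<lambda>n. \<integral>\<^sup>+x. ennreal (fn n x) * indicator (g ` S) x \<partial>lborel) \<longlonglongrightarrow>
       (\<integral>\<^sup>+x. ennreal (f x) * indicator (g ` S) x \<partial>lborel)"
  proof (rule nn_integral_LIMSEQ)
    show "incseq (\<lambda>n x. ennreal (fn n x) * indicator (g ` S) x)"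
      unfolding incseq_def le_fun_def
      by (intro allI impI mult_right_mono ennreal_leI inc) auto
    show "(\<lambda>n. ennreal (fn n x) * indicator (g ` S) x) \<longlonglongrightarrow> ennreal (f x) * indicator (g ` S) x" for x
      by (rule tendsto_eventually) (use ev[of x] in \<open>eventually_elim, simp\<close>)
  qed measurable
  have L2: "(\<lambda>n. \<integral>\<^sup>+x. ennreal (\<bar>g' x\<bar> * fn n (g x)) * indicator S x \<partial>lborel) \<longlonglongrightarrow>
       (\<integral>\<^sup>+x. ennreal (\<bar>g' x\<bar> * f (g x)) * indicator S x \<partial>lborel)"
  proof (rule nn_integral_LIMSEQ)
    show "incseq (\<lambda>n x. ennreal (\<bar>g' x\<bar> * fn n (g x)) * indicator S x)"
      unfolding incseq_def le_fun_def
      by (intro allI impI mult_right_mono ennreal_leI inc mult_left_mono) auto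
    show "(\<lambda>n. ennreal (\<bar>g' x\<bar> * fn n (g x)) * indicator S x) \<longlonglongrightarrow> ennreal (\<bar>g' x\<bar> * f (g x)) * indicator S x" for x
      by (rule tendsto_eventually) (use ev[of "g x"] in \<open>eventually_elim, simp\<close>)
  qed measurable
  show ?thesis using LIMSEQ_unique[OF L1[unfolded fin] L2] .
qed


lemma gamma_nn:
  fixes a p :: real
  assumes a: "a > 0" and p: "p > 0"
  shows "(\<integral>\<^sup>+t\<in>{0<..}. ennreal (t powr (p-1) * exp (-a*t)) \<partial>lborel) = ennreal (Gamma p * a powr (-p))"
proof -
  have img: "(\<lambda>t. a*t) ` {0<..} = ({0<..} :: real set)"
  proof safe
    fix y :: real assume "y > 0"
    hence "y = a * (y/a)" "y/a > 0" using a by auto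
    thus "y \<in> (\<lambda>t. a*t) ` {0<..}" by blast
  qed (use a in auto)
  have "ennreal (Gamma p) = (\<integral>\<^sup>+t. ennreal (indicator {0..} t * t powr (p - 1) / exp t) \<partial>lborel)"
    using Gamma_conv_nn_integral_real[OF p] by simp
  also have "\<dots> = (\<integral>\<^sup>+t\<in>(\<lambda>t. a*t) ` {0<..}. ennreal (t powr (p - 1) / exp t) \<partial>lborel)"
    unfolding img by (intro nn_integral_cong) (auto simp: indicator_def)
  also have "\<dots> = (\<integral>\<^sup>+t\<in>{0<..}. ennreal (\<bar>a\<bar> * ((a*t) powr (p - 1) / exp (a*t))) \<partial>lborel)"
    by (rule nn_subst) (use a in \<open>auto simp: img inj_on_def intro!: derivative_eq_intros\<close>)
  also have "\<dots> = (\<integral>\<^sup>+t\<in>{0<..}. ennreal (a powr p) * ennreal (t powr (p-1) * exp (-a*t)) \<partial>lborel)"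
  proof (intro nn_integral_cong)
    fix t :: real
    show "ennreal (\<bar>a\<bar> * ((a*t) powr (p - 1) / exp (a*t))) * indicator {0<..} t =
      ennreal (a powr p) * ennreal (t powr (p-1) * exp (-a*t)) * indicator {0<..} t"
    proof (cases "t > 0")
      case True
      have "\<bar>a\<bar> * ((a*t) powr (p - 1) / exp (a*t)) = a powr p * (t powr (p-1) * exp (-a*t))"
        using a True by (simp add: powr_mult powr_diff exp_minus field_simps)
      thus ?thesis using a True by (simp add: ennreal_mult')
    qed simp
  qed
  also have "\<dots> = ennreal (a powr p) * (\<integral>\<^sup>+t\<in>{0<..}. ennreal (t powr (p-1) * exp (-a*t)) \<partial>lborel)"
    by (subst nn_integral_cmult[symmetric]) (auto simp: mult.assoc)
  finally have eq: "ennreal (Gamma p) = ennreal (a powr p) * (\<integral>\<^sup>+t\<in>{0<..}. ennreal (t powr (p-1) * exp (-a*t)) \<partial>lborel)" .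
  have "ennreal (a powr (-p)) * ennreal (a powr p) = 1"
    using a by (simp add: ennreal_mult'[symmetric] powr_minus)
  hence "(\<integral>\<^sup>+t\<in>{0<..}. ennreal (t powr (p-1) * exp (-a*t)) \<partial>lborel) = ennreal (a powr (-p)) * ennreal (Gamma p)"
    unfolding eq by (simp add: mult.assoc[symmetric])
  also have "\<dots> = ennreal (Gamma p * a powr (-p))"
    using p by (simp add: ennreal_mult'[symmetric] mult.commute Gamma_real_pos less_imp_le)
  finally show ?thesis .
qed


lemma set_int_nn:
  fixes v :: "real \<Rightarrow> real"
  assumes [measurable]: "v \<in> borel_measurable borel" "A \<in> sets borel" and nn: "\<And>t. t\<in>A \<Longrightarrow> v t \<ge> 0"
    and fin: "(\<integral>\<^sup>+t\<in>A. ennreal (v t) \<partial>lborel) < \<infinity>"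
  shows "set_integrable lborel A v" "(LINT t:A|lborel. v t) = enn2real (\<integral>\<^sup>+t\<in>A. ennreal (v t) \<partial>lborel)"
proof -
  have eq: "(\<integral>\<^sup>+t. ennreal (indicator A t *\<^sub>R v t) \<partial>lborel) = (\<integral>\<^sup>+t\<in>A. ennreal (v t) \<partial>lborel)"
    by (intro nn_integral_cong) (auto simp: indicator_def)
  have eq2: "(\<integral>\<^sup>+t. ennreal (norm (indicator A t *\<^sub>R v t)) \<partial>lborel) = (\<integral>\<^sup>+t\<in>A. ennreal (v t) \<partial>lborel)"
    using nn by (intro nn_integral_cong) (auto simp: indicator_def)
  show "set_integrable lborel A v"
    unfolding set_integrable_def
    by (rule integrableI_bounded) (use eq2 fin in auto)
  show "(LINT t:A|lborel. v t) = enn2real (\<integral>\<^sup>+t\<in>A. ennreal (v t) \<partial>lborel)"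
    unfolding set_lebesgue_integral_def
    by (subst integral_eq_nn_integral) (use nn eq in \<open>auto simp: indicator_def\<close>)
qed



theorem corollary1:
  fixes M :: "'a measure"
    and X Y Z :: "'a \<Rightarrow> real"
    and fX fY fZ :: "real \<Rightarrow> real"
    and A B C :: "real \<Rightarrow> real"
    and \<theta> p :: real
  assumes "prob_space M"
    and "\<forall>x. fX x \<ge> 0" and "\<forall>x. fY x \<ge> 0" and "\<forall>x. fZ x \<ge> 0"
    and "distributed M lborel X (\<lambda>x. ennreal (fX x))"
    and "distributed M lborel Y (\<lambda>x. ennreal (fY x))"
    and "distributed M lborel Z (\<lambda>x. ennreal (fZ x))"
    and "AE \<omega> in M. X \<omega> > 0"
    and "AE \<omega> in M. Y \<omega> > 0"
    and "AE \<omega> in M. Z \<omega> > 0"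
    and "prob_space.indep_var M borel X borel Y"
    and "distr M borel Z = distr M borel (\<lambda>\<omega>. X \<omega> / (X \<omega> + Y \<omega>))"
    and "\<forall>x>0. A x > 0" and "\<forall>x>0. B x > 0" and "\<forall>x>0. C x > 0"
    and "\<forall>x>0. \<forall>s>0. fY (s * x) = A s * B x * C (s * x)"
    and "\<theta> > 0" and "p > 0"
    and "\<forall>x>0. C x = (1 + \<theta> * x) powr (- p)"
  shows "\<exists>h g.
     is_inv_laplace
       (\<lambda>s. 1 / (s powr p * A (1 / (\<theta> * s))) * ((\<theta> * s) / (1 + \<theta> * s))\<^sup>2
             * fZ ((\<theta> * s) / (1 + \<theta> * s))) h
   \<and> is_inv_laplace (\<lambda>t. t powr (1 - p) * h t) g
   \<and> (AE x in lborel. x > 0 \<longrightarrow> fX x = Gamma p / (x * B x) * g x)"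
proof -
  interpret prob_space M by (rule assms(1))
  have fXnn: "\<And>x. fX x \<ge> 0" and fYnn: "\<And>x. fY x \<ge> 0" and fZnn: "\<And>x. fZ x \<ge> 0"
    using assms(2-4) by auto
  have th: "\<theta> > 0" and pp: "p > 0" using assms(17,18) by auto
  have Apos: "\<And>x. x > 0 \<Longrightarrow> A x > 0" and Bpos: "\<And>x. x > 0 \<Longrightarrow> B x > 0" using assms(13,14) by auto
  have dec: "\<And>x s. x > 0 \<Longrightarrow> s > 0 \<Longrightarrow> fY (s * x) = A s * B x * C (s * x)" using assms(16) by auto
  have Cf: "\<And>x. x > 0 \<Longrightarrow> C x = (1 + \<theta> * x) powr (- p)" using assms(19) by auto
  have fXm[measurable]: "fX \<in> borel_measurable borel"
    using distributed_real_measurable[OF _ assms(5)] fXnn by simp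
  have fYm[measurable]: "fY \<in> borel_measurable borel"
    using distributed_real_measurable[OF _ assms(6)] fYnn by simp
  have fZm[measurable]: "fZ \<in> borel_measurable borel"
    using distributed_real_measurable[OF _ assms(7)] fZnn by simp
  have Gp: "Gamma p > 0" using pp by (rule Gamma_real_pos)
  define B' where "B' x = fY x * (1 + \<theta> * x) powr p / A 1" for x
  define \<phi> where "\<phi> x = (if x > 0 then x * B' x * fX x else 0)" for x
  define G where "G s = (\<integral>\<^sup>+x. ennreal (\<phi> x * (s+x) powr (-p)) \<partial>lborel)" for s
  define Lt where "Lt t = (\<integral>\<^sup>+x. ennreal (\<phi> x * exp (-t*x)) \<partial>lborel)" for t
  define h where "h t = (if t>0 then t powr (p-1) / Gamma p * enn2real (Lt t) else 0)" for t
  define g where "g x = \<phi> x / Gamma p" for x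
  define F1 where "F1 = (\<lambda>s. 1 / (s powr p * A (1 / (\<theta> * s))) * ((\<theta> * s) / (1 + \<theta> * s))\<^sup>2
             * fZ ((\<theta> * s) / (1 + \<theta> * s)))"
  have A1: "A 1 > 0" using Apos by simp
  have BB': "B x = B' x" if "x > 0" for x
  proof -
    have "fY x = A 1 * B x * (1 + \<theta> * x) powr (- p)" using dec[of x 1] Cf[of x] that by simp
    moreover have "1 + \<theta> * x > 0" using mult_pos_pos[OF th that] by linarith
    ultimately show ?thesis using A1 unfolding B'_def by (simp add: powr_minus field_simps)
  qed
  have B'nn: "B' x \<ge> 0" for x using A1 fYnn unfolding B'_def by simp
  have \<phi>nn: "\<phi> x \<ge> 0" for x using B'nn fXnn unfolding \<phi>_def by simp
  have \<phi>m[measurable]: "\<phi> \<in> borel_measurable borel" unfolding \<phi>_def B'_def by measurable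
  have Ltm[measurable]: "Lt \<in> borel_measurable borel" unfolding Lt_def by measurable
  have hm[measurable]: "h \<in> borel_measurable borel" unfolding h_def by measurable
  have gm[measurable]: "g \<in> borel_measurable borel" unfolding g_def by measurable
  have hnn: "h t \<ge> 0" for t using Gp unfolding h_def by simp
  have F1nn: "F1 s \<ge> 0" if "s > 0" for s
    using that th Apos[of "1 / (\<theta> * s)"] fZnn unfolding F1_def by simp
  have key: "AE s in lborel. s > 0 \<longrightarrow> G s = ennreal (F1 s)"
  proof -
    have Xm[measurable]: "X \<in> borel_measurable M" using distributed_measurable[OF assms(5)] by simp
    have Ym[measurable]: "Y \<in> borel_measurable M" using distributed_measurable[OF assms(6)] by simp
    have Zm[measurable]: "Z \<in> borel_measurable M" using distributed_measurable[OF assms(7)] by simp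
    have zero_dens: "AE x in lborel. x \<le> 0 \<longrightarrow> f x = 0"
      if dW: "distributed M lborel W (\<lambda>x. ennreal (f x))" and pW: "AE \<omega> in M. W \<omega> > 0"
        and fnn: "\<And>x. f x \<ge> 0" for W :: "'a \<Rightarrow> real" and f :: "real \<Rightarrow> real"
    proof -
      have Wm[measurable]: "W \<in> borel_measurable M" using distributed_measurable[OF dW] by simp
      have fm[measurable]: "f \<in> borel_measurable borel" using distributed_real_measurable[OF _ dW] fnn by simp
      have s1: "W -` {..0} \<inter> space M \<in> events" by (rule measurable_sets[OF Wm]) simp
      have s2: "{x \<in> space M. \<not> 0 < W x} = W -` {..0} \<inter> space M" by (auto simp: not_less)
      have "emeasure M (W -` {..0} \<inter> space M) = 0"
        using pW AE_iff_measurable[OF s1 s2] by simp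
      hence "(\<integral>\<^sup>+x. ennreal (f x) * indicator {..0} x \<partial>lborel) = 0"
        using distributed_emeasure[OF dW, of "{..0}"] by simp
      hence "AE x in lborel. ennreal (f x) * indicator {..0} x = 0"
        by (subst (asm) nn_integral_0_iff_AE) auto
      thus ?thesis
      proof eventually_elim
        case (elim x)
        show ?case using elim fnn[of x] by (auto simp: indicator_def)
      qed
    qed
    have hX0: "AE x in lborel. x \<le> 0 \<longrightarrow> fX x = 0" by (rule zero_dens[OF assms(5) assms(8) fXnn])
    have hY0: "AE x in lborel. x \<le> 0 \<longrightarrow> fY x = 0" by (rule zero_dens[OF assms(6) assms(9) fYnn])
    have ind: "indep_var lborel X lborel Y"
    proof -
      have e1: "sets (case_bool lborel lborel i) = sets (case_bool borel borel i :: real measure)" for i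
        by (cases i) auto
      have e2: "measurable M (case_bool lborel lborel i) = measurable M (case_bool borel borel i :: real measure)" for i
        by (cases i) auto
      show ?thesis using assms(11) unfolding indep_var_def indep_vars_def e1 e2 .
    qed
    have joint: "distributed M (lborel \<Otimes>\<^sub>M lborel) (\<lambda>\<omega>. (X \<omega>, Y \<omega>)) (\<lambda>(x, y). ennreal (fX x) * ennreal (fY y))"
      by (rule distributed_joint_indep[OF _ _ assms(5) assms(6) ind]) (auto intro: lborel.sigma_finite_measure_axioms)
    define zf where "zf = (\<lambda>s::real. (\<theta> * s) / (1 + \<theta> * s))"
    define u where "u s = ennreal (\<theta>/(1 + \<theta> * s)^2 * fZ (zf s)) * indicator {0<..} s" for s :: real
    define v where "v s = (\<integral>\<^sup>+x. ennreal (fX x * indicator {0<..} x * (x/(\<theta> * s^2)) * fY (x/(\<theta> * s))) \<partial>lborel) * indicator {0<..} s" for s :: real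
    have pos1: "1 + \<theta> * s > 0" if "s > 0" for s using mult_pos_pos[OF th that] by linarith
    have zf_inv: "zf s / (\<theta> * (1 - zf s)) = s" if "s > 0" for s
    proof -
      have "1 - zf s = 1 / (1 + \<theta> * s)" using pos1[OF that] unfolding zf_def by (simp add: field_simps)
      thus ?thesis using pos1[OF that] th unfolding zf_def by simp
    qed
    have zf_01: "0 < zf s \<and> zf s < 1" if "s > 0" for s
      using pos1[OF that] th that unfolding zf_def by (simp add: field_simps)
    have zf_sur: "w \<in> zf ` {0<..}" if w: "0 < w" "w < 1" for w
    proof -
      define s where "s = w / (\<theta> * (1 - w))"
      have "s > 0" using w th unfolding s_def by simp
      moreover have "zf s = w" using w th unfolding s_def zf_def by (simp add: field_simps)
      ultimately show "w \<in> zf ` {0<..}" by force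
    qed
    have zf_img: "zf ` {0<..} = {0<..<1}"
      using zf_sur zf_01 by force
    have zf_inj: "inj_on zf {0<..}"
    proof (rule inj_onI)
      fix a b :: real assume "a \<in> {0<..}" "b \<in> {0<..}" "zf a = zf b"
      hence "zf a / (\<theta> * (1 - zf a)) = zf b / (\<theta> * (1 - zf b))" by simp
      thus "a = b" using zf_inv \<open>a \<in> {0<..}\<close> \<open>b \<in> {0<..}\<close> by simp
    qed
    have zf_der: "(zf has_real_derivative \<theta>/(1 + \<theta> * s)^2) (at s)" if "s > 0" for s
      unfolding zf_def using pos1[OF that]
      by (auto intro!: derivative_eq_intros simp: field_simps power2_eq_square)
    have um[measurable]: "u \<in> borel_measurable borel" unfolding u_def zf_def by measurable
    have vm[measurable]: "v \<in> borel_measurable borel" unfolding v_def by measurable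
    have main: "(\<integral>\<^sup>+s. u s * indicator T s \<partial>lborel) = (\<integral>\<^sup>+s. v s * indicator T s \<partial>lborel)"
      if T[measurable]: "T \<in> sets borel" for T
    proof -
      define ST where "ST = {w. 0 < w \<and> w < 1 \<and> w / (\<theta> * (1 - w)) \<in> T}"
      have ST[measurable]: "ST \<in> sets borel" unfolding ST_def by measurable
      have ind_ST: "indicator ST (zf s) = (indicator T s :: ennreal)" if "s > 0" for s
        using zf_inv[OF that] zf_01[OF that] by (auto simp: ST_def indicator_def)
      define R where "R = {xy :: real \<times> real. fst xy / (fst xy + snd xy) \<in> ST}"
      have R[measurable]: "R \<in> sets (lborel \<Otimes>\<^sub>M lborel)"
      proof -
        have rm: "(\<lambda>xy::real\<times>real. fst xy / (fst xy + snd xy)) \<in> borel_measurable (lborel \<Otimes>\<^sub>M lborel)"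
          by measurable
        have "(\<lambda>xy::real\<times>real. fst xy / (fst xy + snd xy)) -` ST \<inter> space (lborel \<Otimes>\<^sub>M lborel) \<in> sets (lborel \<Otimes>\<^sub>M lborel)"
          by (rule measurable_sets[OF rm ST])
        moreover have "(\<lambda>xy::real\<times>real. fst xy / (fst xy + snd xy)) -` ST \<inter> space (lborel \<Otimes>\<^sub>M lborel) = R"
          unfolding R_def by (auto simp: space_pair_measure)
        ultimately show ?thesis by simp
      qed
      have eqZ: "emeasure M (Z -` ST \<inter> space M) = emeasure M ((\<lambda>\<omega>. (X \<omega>, Y \<omega>)) -` R \<inter> space M)"
      proof -
        have "emeasure (distr M borel Z) ST = emeasure (distr M borel (\<lambda>\<omega>. X \<omega> / (X \<omega> + Y \<omega>))) ST"
          using assms(12) by simp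
        hence "emeasure M (Z -` ST \<inter> space M) = emeasure M ((\<lambda>\<omega>. X \<omega> / (X \<omega> + Y \<omega>)) -` ST \<inter> space M)"
          by (subst (asm) (1 2) emeasure_distr) auto
        also have "(\<lambda>\<omega>. X \<omega> / (X \<omega> + Y \<omega>)) -` ST \<inter> space M = (\<lambda>\<omega>. (X \<omega>, Y \<omega>)) -` R \<inter> space M"
          unfolding R_def by auto
        finally show ?thesis .
      qed
      have lhs: "emeasure M (Z -` ST \<inter> space M) = (\<integral>\<^sup>+s. u s * indicator T s \<partial>lborel)"
      proof -
        have "emeasure M (Z -` ST \<inter> space M) = (\<integral>\<^sup>+w. ennreal (fZ w) * indicator ST w \<partial>lborel)"
          by (rule distributed_emeasure[OF assms(7)]) simp
        also have "\<dots> = (\<integral>\<^sup>+w\<in>zf ` {0<..}. ennreal (fZ w * indicator ST w) \<partial>lborel)"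
          unfolding zf_img by (intro nn_integral_cong) (auto simp: indicator_def ST_def)
        also have "\<dots> = (\<integral>\<^sup>+s\<in>{0<..}. ennreal (\<bar>\<theta> / (1 + \<theta> * s)^2\<bar> * (fZ (zf s) * indicator ST (zf s))) \<partial>lborel)"
        proof (rule nn_subst)
          show "zf ` {0<..} \<in> sets borel" unfolding zf_img by simp
          show "(\<lambda>s. \<theta> / (1 + \<theta> * s)^2) \<in> borel_measurable borel" by measurable
          show "zf \<in> borel_measurable borel" unfolding zf_def by measurable
          show "(\<lambda>w. fZ w * indicator ST w) \<in> borel_measurable borel" by measurable
          show "\<And>w. 0 \<le> fZ w * indicator ST w" using fZnn by (simp add: indicator_def)
        qed (use zf_der zf_inj in auto)
        also have "\<dots> = (\<integral>\<^sup>+s. u s * indicator T s \<partial>lborel)"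
        proof (intro nn_integral_cong)
          fix s :: real
          show "ennreal (\<bar>\<theta> / (1 + \<theta> * s)^2\<bar> * (fZ (zf s) * indicator ST (zf s))) * indicator {0<..} s = u s * indicator T s"
          proof (cases "s > 0")
            case True
            have "ennreal (\<bar>\<theta> / (1 + \<theta> * s)^2\<bar> * (fZ (zf s) * indicator ST (zf s))) =
                  ennreal (\<theta> / (1 + \<theta> * s)^2 * fZ (zf s)) * indicator ST (zf s)"
              using th by (simp add: indicator_def)
            thus ?thesis using True ind_ST[OF True] unfolding u_def by simp
          qed (simp add: u_def)
        qed
        finally show ?thesis .
      qed
      define kk where "kk x s = ennreal (fX x * indicator {0<..} x * (x / (\<theta> * s^2)) * fY (x / (\<theta> * s))) * indicator {0<..} s * indicator T s" for x s :: real
      have kkm: "case_prod kk \<in> borel_measurable (lborel \<Otimes>\<^sub>M lborel)" unfolding kk_def by measurable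
      have inner: "(\<integral>\<^sup>+y. ennreal (fX x) * ennreal (fY y) * indicator R (x, y) \<partial>lborel) = (\<integral>\<^sup>+s. kk x s \<partial>lborel)"
        if x: "x > 0" for x
      proof -
        define gg where "gg s = x / (\<theta> * s)" for s :: real
        have gg_img: "gg ` {0<..} = {0<..}"
        proof -
          have "y \<in> gg ` {0<..}" if "y > 0" for y
          proof -
            have "gg (x / (\<theta> * y)) = y" "x / (\<theta> * y) > 0" using that x th unfolding gg_def by auto
            thus ?thesis by force
          qed
          moreover have "gg s > 0" if "s > 0" for s using that x th unfolding gg_def by simp
          ultimately show ?thesis by force
        qed
        have gg_inj: "inj_on gg {0<..}"
          by (rule inj_onI) (use x th in \<open>auto simp: gg_def field_simps\<close>)
        have gg_der: "(gg has_real_derivative - x / (\<theta> * s^2)) (at s)" if "s > 0" for s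
          unfolding gg_def using that th
          by (auto intro!: derivative_eq_intros simp: field_simps power2_eq_square)
        have "(\<integral>\<^sup>+y. ennreal (fX x) * ennreal (fY y) * indicator R (x, y) \<partial>lborel) =
              (\<integral>\<^sup>+y. ennreal (fX x) * ennreal (fY y * indicator ST (x / (x + y))) \<partial>lborel)"
          by (intro nn_integral_cong) (auto simp: R_def indicator_def)
        also have "\<dots> = ennreal (fX x) * (\<integral>\<^sup>+y. ennreal (fY y * indicator ST (x / (x + y))) \<partial>lborel)"
          by (rule nn_integral_cmult) measurable
        also have "(\<integral>\<^sup>+y. ennreal (fY y * indicator ST (x / (x + y))) \<partial>lborel) =
              (\<integral>\<^sup>+y\<in>gg ` {0<..}. ennreal (fY y * indicator ST (x / (x + y))) \<partial>lborel)"
          unfolding gg_img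
        proof (intro nn_integral_cong_AE)
          show "AE y in lborel. ennreal (fY y * indicator ST (x / (x + y))) = ennreal (fY y * indicator ST (x / (x + y))) * indicator {0<..} y"
            using hY0 by eventually_elim (auto simp: indicator_def)
        qed
        also have "\<dots> = (\<integral>\<^sup>+s\<in>{0<..}. ennreal (\<bar>- x / (\<theta> * s^2)\<bar> * (fY (gg s) * indicator ST (x / (x + gg s)))) \<partial>lborel)"
        proof (rule nn_subst)
          show "gg ` {0<..} \<in> sets borel" unfolding gg_img by simp
          show "(\<lambda>s. - x / (\<theta> * s^2)) \<in> borel_measurable borel" by measurable
          show "gg \<in> borel_measurable borel" unfolding gg_def by measurable
          show "(\<lambda>y. fY y * indicator ST (x / (x + y))) \<in> borel_measurable borel" by measurable
          show "\<And>y. 0 \<le> fY y * indicator ST (x / (x + y))" using fYnn by (simp add: indicator_def)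
        qed (use gg_der gg_inj in auto)
        also have "ennreal (fX x) * \<dots> = (\<integral>\<^sup>+s. ennreal (fX x) * (ennreal (\<bar>- x / (\<theta> * s^2)\<bar> * (fY (gg s) * indicator ST (x / (x + gg s)))) * indicator {0<..} s) \<partial>lborel)"
          by (rule nn_integral_cmult[symmetric]) (simp add: gg_def)
        also have "\<dots> = (\<integral>\<^sup>+s. kk x s \<partial>lborel)"
        proof (intro nn_integral_cong)
          fix s :: real
          show "ennreal (fX x) * (ennreal (\<bar>- x / (\<theta> * s^2)\<bar> * (fY (gg s) * indicator ST (x / (x + gg s)))) * indicator {0<..} s) = kk x s"
          proof (cases "s > 0")
            case True
            have d: "x + \<theta> * (s * x) > 0" using mult_pos_pos[OF x pos1[OF True]] by (simp add: algebra_simps)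
            have e1: "x / (x + gg s) = zf s" unfolding gg_def zf_def using x th True d pos1[OF True]
              by (simp add: field_simps)
            have "ennreal (fX x) * ennreal (\<bar>- x / (\<theta> * s^2)\<bar> * (fY (gg s) * indicator ST (x / (x + gg s)))) =
                  ennreal (fX x * (x / (\<theta> * s^2)) * fY (gg s)) * indicator ST (zf s)"
              unfolding e1 using x th True fXnn[of x] fYnn[of "gg s"]
              by (simp add: indicator_def ennreal_mult'[symmetric] mult_ac)
            thus ?thesis using True x ind_ST[OF True] unfolding kk_def gg_def by (simp add: mult_ac)
          qed (simp add: kk_def)
        qed
        finally show ?thesis .
      qed
      have rhs: "emeasure M ((\<lambda>\<omega>. (X \<omega>, Y \<omega>)) -` R \<inter> space M) = (\<integral>\<^sup>+s. v s * indicator T s \<partial>lborel)"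
      proof -
        have "emeasure M ((\<lambda>\<omega>. (X \<omega>, Y \<omega>)) -` R \<inter> space M) =
           (\<integral>\<^sup>+xy. (\<lambda>(x, y). ennreal (fX x) * ennreal (fY y)) xy * indicator R xy \<partial>(lborel \<Otimes>\<^sub>M lborel))"
          by (rule distributed_emeasure[OF joint R])
        also have "\<dots> = (\<integral>\<^sup>+x. \<integral>\<^sup>+y. ennreal (fX x) * ennreal (fY y) * indicator R (x, y) \<partial>lborel \<partial>lborel)"
          by (subst lborel.nn_integral_fst[symmetric]) (auto simp: case_prod_beta)
        also have "\<dots> = (\<integral>\<^sup>+x. \<integral>\<^sup>+s. kk x s \<partial>lborel \<partial>lborel)"
        proof (intro nn_integral_cong_AE)
          show "AE x in lborel. (\<integral>\<^sup>+y. ennreal (fX x) * ennreal (fY y) * indicator R (x, y) \<partial>lborel) = (\<integral>\<^sup>+s. kk x s \<partial>lborel)"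
            using hX0
          proof eventually_elim
            case (elim x)
            show ?case
            proof (cases "x > 0")
              case True
              thus ?thesis by (rule inner)
            next
              case False
              thus ?thesis using elim by (simp add: kk_def)
            qed
          qed
        qed
        also have "\<dots> = (\<integral>\<^sup>+s. \<integral>\<^sup>+x. kk x s \<partial>lborel \<partial>lborel)"
          by (rule lborel_pair.Fubini'[OF kkm, symmetric])
        also have "\<dots> = (\<integral>\<^sup>+s. v s * indicator T s \<partial>lborel)"
        proof (intro nn_integral_cong)
          fix s :: real
          show "(\<integral>\<^sup>+x. kk x s \<partial>lborel) = v s * indicator T s"
          proof -
            have "(\<integral>\<^sup>+x. kk x s \<partial>lborel) = (\<integral>\<^sup>+x. ennreal (fX x * indicator {0<..} x * (x / (\<theta> * s^2)) * fY (x / (\<theta> * s))) \<partial>lborel) * (indicator {0<..} s * indicator T s)"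
              unfolding kk_def mult.assoc[of _ "indicator {0<..} s" "indicator T s"] by (rule nn_integral_multc) measurable
            thus ?thesis unfolding v_def by (simp add: mult.assoc)
          qed
        qed
        finally show ?thesis .
      qed
      show ?thesis using lhs rhs eqZ by simp
    qed
    have "density lborel u = density lborel v"
      by (rule measure_eqI) (auto simp: emeasure_density main)
    hence uv: "AE s in lborel. u s = v s"
      by (rule sigma_finite_measure.density_unique[OF lborel.sigma_finite_measure_axioms, rotated 2]) auto
    show ?thesis using uv
    proof eventually_elim
      case (elim s)
      show ?case
      proof
        assume s: "s > 0"
        define a where "a = A (1 / (\<theta> * s))"
        have a: "a > 0" unfolding a_def using Apos th s by simp
        define c where "c = a * s powr p / (\<theta> * s^2)"
        have c: "c > 0" unfolding c_def using a th s by simp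
        have pw: "fX x * indicator {0<..} x * (x / (\<theta> * s^2)) * fY (x / (\<theta> * s)) = c * (\<phi> x * (s + x) powr (-p))" for x
        proof (cases "x > 0")
          case True
          have y: "(1 / (\<theta> * s)) * x > 0" using True th s by simp
          have "fY (x / (\<theta> * s)) = fY ((1 / (\<theta> * s)) * x)" by simp
          also have "\<dots> = a * B x * C ((1 / (\<theta> * s)) * x)" unfolding a_def
            using dec[of x "1 / (\<theta> * s)"] True th s by simp
          also have "C ((1 / (\<theta> * s)) * x) = ((s + x) / s) powr (-p)"
            using Cf[OF y] th s by (simp add: field_simps)
          also have "\<dots> = s powr p * (s + x) powr (-p)"
            using s True by (simp add: powr_divide powr_minus field_simps)
          finally have "fY (x / (\<theta> * s)) = a * B' x * (s powr p * (s + x) powr (-p))"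
            using BB'[OF True] by simp
          thus ?thesis using True unfolding c_def \<phi>_def by (simp add: field_simps power2_eq_square)
        qed (simp add: \<phi>_def)
        have "v s = (\<integral>\<^sup>+x. ennreal (fX x * indicator {0<..} x * (x / (\<theta> * s^2)) * fY (x / (\<theta> * s))) \<partial>lborel)"
          unfolding v_def using s by simp
        also have "\<dots> = (\<integral>\<^sup>+x. ennreal c * ennreal (\<phi> x * (s + x) powr (-p)) \<partial>lborel)"
        proof (intro nn_integral_cong)
          fix x :: real
          show "ennreal (fX x * indicator {0<..} x * (x / (\<theta> * s^2)) * fY (x / (\<theta> * s))) =
                ennreal c * ennreal (\<phi> x * (s + x) powr (-p))"
            unfolding pw by (rule ennreal_mult) (use c \<phi>nn[of x] in auto)
        qed
        also have "\<dots> = ennreal c * G s" unfolding G_def by (rule nn_integral_cmult) measurable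
        finally have vG: "v s = ennreal c * G s" .
        define r where "r = \<theta> / (1 + \<theta> * s)^2 * fZ (zf s)"
        have r: "r \<ge> 0" unfolding r_def using th fZnn by simp
        have rc: "ennreal r = ennreal c * G s" using elim s vG unfolding u_def r_def by simp
        have "G s = ennreal (1 / c) * (ennreal c * G s)"
          using c by (simp add: mult.assoc[symmetric] ennreal_mult'[symmetric])
        also have "\<dots> = ennreal (1 / c) * ennreal r" using rc by simp
        also have "\<dots> = ennreal (r / c)" using r c by (simp add: ennreal_mult[symmetric])
        also have "r / c = F1 s"
          unfolding r_def c_def F1_def zf_def a_def using s th a pos1[OF s]
          by (simp add: field_simps power2_eq_square)
        finally show "G s = ennreal (F1 s)" .
      qed
    qed
  qed
  have "\<exists>s0>0. G s0 < \<infinity>"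
  proof (rule ccontr)
    assume "\<not> (\<exists>s0>0. G s0 < \<infinity>)"
    hence nc: "\<And>s. s > 0 \<Longrightarrow> \<not> G s < \<infinity>" by blast
    have "AE s in lborel. s \<notin> ({0<..}::real set)" using key
    proof eventually_elim
      case (elim s)
      show ?case
      proof
        assume "s \<in> {0<..}"
        hence "s > 0" by simp
        thus False using elim nc[of s] by simp
      qed
    qed
    hence "emeasure lborel ({0<..}::real set) = 0"
      using AE_iff_measurable[of "({0<..}::real set)" lborel "\<lambda>s. s \<notin> {0<..}"] by auto
    moreover have "emeasure lborel ({1..2}::real set) \<le> emeasure lborel ({0<..}::real set)"
      by (rule emeasure_mono) auto
    ultimately show False by simp
  qed
  then obtain s0 where s0: "s0 > 0" "G s0 < \<infinity>" by blast
  have Gfin: "G s < \<infinity>" if s: "s > 0" for s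
  proof -
    define m where "m = max 1 (s0/s)"
    have m: "m > 0" "m \<ge> 1" "m * s \<ge> s0" using s s0 unfolding m_def by (auto simp: field_simps max_def)
    have "G s \<le> (\<integral>\<^sup>+x. ennreal (m powr p) * ennreal (\<phi> x * (s0+x) powr (-p)) \<partial>lborel)"
      unfolding G_def
    proof (intro nn_integral_mono)
      fix x :: real
      show "ennreal (\<phi> x * (s+x) powr (-p)) \<le> ennreal (m powr p) * ennreal (\<phi> x * (s0+x) powr (-p))"
      proof (cases "x > 0")
        case True
        have le: "s0 + x \<le> m * (s + x)" using m True by (simp add: algebra_simps) (smt (verit) mult_le_cancel_right1 True)
        have "(s0+x) powr p \<le> (m*(s+x)) powr p" by (rule powr_mono2) (use pp le s0 True in auto)
        also have "\<dots> = m powr p * (s+x) powr p" using m s True by (simp add: powr_mult)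
        finally have "(s0+x) powr p \<le> m powr p * (s+x) powr p" .
        hence "(s+x) powr (-p) \<le> m powr p * (s0+x) powr (-p)"
          using s s0 True m by (simp add: powr_minus divide_simps mult_ac)
        hence "\<phi> x * (s+x) powr (-p) \<le> m powr p * (\<phi> x * (s0+x) powr (-p))"
          using \<phi>nn[of x] by (metis mult.left_commute mult_left_mono)
        thus ?thesis using \<phi>nn[of x] by (simp add: ennreal_mult'[symmetric] ennreal_leI)
      qed (simp add: \<phi>_def)
    qed
    also have "\<dots> = ennreal (m powr p) * G s0" unfolding G_def by (rule nn_integral_cmult) measurable
    also have "\<dots> < \<infinity>" using s0 by (simp add: ennreal_mult_less_top)
    finally show ?thesis .
  qed
  have Lfin: "Lt t < \<infinity>" if t: "t > 0" for t
  proof -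
    define s where "s = p / t"
    have s: "s > 0" using pp t unfolding s_def by simp
    have "Lt t \<le> (\<integral>\<^sup>+x. ennreal (s powr p) * ennreal (\<phi> x * (s+x) powr (-p)) \<partial>lborel)"
      unfolding Lt_def
    proof (intro nn_integral_mono)
      fix x :: real
      show "ennreal (\<phi> x * exp (-t*x)) \<le> ennreal (s powr p) * ennreal (\<phi> x * (s+x) powr (-p))"
      proof (cases "x > 0")
        case True
        have "(s+x) powr p = (s * (1 + x/s)) powr p" using s by (simp add: distrib_left)
        also have "\<dots> = s powr p * (1 + x/s) powr p" using s True by (simp add: powr_mult)
        also have "(1 + x/s) powr p \<le> exp (x/s) powr p"
          by (rule powr_mono2) (use pp s True in auto)
        also have "exp (x/s) powr p = exp (t*x)" using s pp unfolding exp_powr_real s_def by (simp add: field_simps)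
        finally have a: "(s+x) powr p \<le> s powr p * exp (t*x)" using s by simp
        have "exp (-t*x) \<le> s powr p * (s+x) powr (-p)"
          using a s True by (simp add: powr_minus exp_minus divide_simps mult_ac)
        hence "\<phi> x * exp (-t*x) \<le> s powr p * (\<phi> x * (s+x) powr (-p))"
          using \<phi>nn[of x] by (metis mult.left_commute mult_left_mono)
        thus ?thesis using \<phi>nn[of x] by (simp add: ennreal_mult'[symmetric] ennreal_leI)
      qed (simp add: \<phi>_def)
    qed
    also have "\<dots> = ennreal (s powr p) * G s" unfolding G_def by (rule nn_integral_cmult) measurable
    also have "\<dots> < \<infinity>" using Gfin[OF s] by (simp add: ennreal_mult_less_top)
    finally show ?thesis .
  qed
  have hlap: "(\<integral>\<^sup>+t\<in>{0<..}. ennreal (exp (-s*t) * h t) \<partial>lborel) = G s" if s: "s > 0" for s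
  proof -
    define k where "k x t = ennreal (indicator {0<..} t * (t powr (p-1) * exp (-s*t) / Gamma p) * (\<phi> x * exp (-t*x)))" for x t
    have km: "case_prod k \<in> borel_measurable (lborel \<Otimes>\<^sub>M lborel)" unfolding k_def by measurable
    have "(\<integral>\<^sup>+t\<in>{0<..}. ennreal (exp (-s*t) * h t) \<partial>lborel) = (\<integral>\<^sup>+t. (\<integral>\<^sup>+x. k x t \<partial>lborel) \<partial>lborel)"
    proof (intro nn_integral_cong)
      fix t :: real
      show "ennreal (exp (-s*t) * h t) * indicator {0<..} t = (\<integral>\<^sup>+x. k x t \<partial>lborel)"
      proof (cases "t > 0")
        case True
        have c: "t powr (p-1) * exp (-s*t) / Gamma p \<ge> 0" using Gp by simp
        have "exp (-s*t) * h t = (t powr (p-1) * exp (-s*t) / Gamma p) * enn2real (Lt t)"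
          using True by (simp add: h_def)
        hence "ennreal (exp (-s*t) * h t) = ennreal (t powr (p-1) * exp (-s*t) / Gamma p) * ennreal (enn2real (Lt t))"
          using c by (simp only: ennreal_mult[OF c enn2real_nonneg])
        also have "ennreal (enn2real (Lt t)) = Lt t" using Lfin[OF True] by simp
        also have "ennreal (t powr (p-1) * exp (-s*t) / Gamma p) * Lt t = (\<integral>\<^sup>+x. k x t \<partial>lborel)"
          unfolding Lt_def k_def using True c \<phi>nn
          by (subst nn_integral_cmult[symmetric]) (auto intro!: nn_integral_cong simp: ennreal_mult'[symmetric])
        finally show ?thesis using True by simp
      qed (simp add: k_def)
    qed
    also have "\<dots> = (\<integral>\<^sup>+x. (\<integral>\<^sup>+t. k x t \<partial>lborel) \<partial>lborel)"
      by (rule lborel_pair.Fubini'[OF km])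
    also have "\<dots> = G s" unfolding G_def
    proof (intro nn_integral_cong)
      fix x :: real
      show "(\<integral>\<^sup>+t. k x t \<partial>lborel) = ennreal (\<phi> x * (s+x) powr (-p))"
      proof (cases "x > 0")
        case True
        have "(\<integral>\<^sup>+t. k x t \<partial>lborel) = (\<integral>\<^sup>+t. ennreal (\<phi> x / Gamma p) * (ennreal (t powr (p-1) * exp (-(s+x)*t)) * indicator {0<..} t) \<partial>lborel)"
          unfolding k_def using Gp \<phi>nn[of x]
          by (intro nn_integral_cong) (auto simp: indicator_def ennreal_mult'[symmetric] exp_add[symmetric] algebra_simps)
        also have "\<dots> = ennreal (\<phi> x / Gamma p) * ennreal (Gamma p * (s+x) powr (-p))"
          using gamma_nn[of "s+x" p] True s pp by (subst nn_integral_cmult) auto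
        also have "\<dots> = ennreal (\<phi> x * (s+x) powr (-p))"
          using Gp \<phi>nn[of x] by (simp add: ennreal_mult'[symmetric])
        finally show ?thesis .
      qed (simp add: k_def \<phi>_def)
    qed
    finally show ?thesis .
  qed
  have glap: "(\<integral>\<^sup>+t\<in>{0<..}. ennreal (exp (-s*t) * g t) \<partial>lborel) = ennreal (1 / Gamma p) * Lt s" for s
  proof -
    have "(\<integral>\<^sup>+t\<in>{0<..}. ennreal (exp (-s*t) * g t) \<partial>lborel) =
       (\<integral>\<^sup>+t. ennreal (1 / Gamma p) * ennreal (\<phi> t * exp (-s*t)) \<partial>lborel)"
      using Gp \<phi>nn by (intro nn_integral_cong) (auto simp: g_def \<phi>_def indicator_def ennreal_mult'[symmetric] mult_ac)
    also have "\<dots> = ennreal (1 / Gamma p) * Lt s" unfolding Lt_def by (rule nn_integral_cmult) measurable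
    finally show ?thesis .
  qed
  have inv1: "is_inv_laplace F1 h"
      unfolding is_inv_laplace_def
    proof (intro conjI allI impI)
      show "h \<in> borel_measurable borel" by measurable
      fix s :: real assume s: "s > 0"
      show "set_integrable lborel {0<..} (\<lambda>t. exp (- s * t) * h t)"
        by (rule set_int_nn(1)) (use hnn hlap[OF s] Gfin[OF s] in auto)
    next
      show "AE s in lborel. 0 < s \<longrightarrow> laplace h s = F1 s"
        using key
      proof eventually_elim
        case (elim s)
        show ?case
        proof
          assume s: "s > 0"
          have "laplace h s = enn2real (G s)" unfolding laplace_def
            by (subst set_int_nn(2)) (use hnn hlap[OF s] Gfin[OF s] in auto)
          thus "laplace h s = F1 s" using elim s F1nn[OF s] by simp
        qed
      qed
    qed
  have inv2: "is_inv_laplace (\<lambda>t. t powr (1 - p) * h t) g"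
      unfolding is_inv_laplace_def
    proof (intro conjI allI impI)
      show "g \<in> borel_measurable borel" by measurable
      fix s :: real assume s: "s > 0"
      show "set_integrable lborel {0<..} (\<lambda>t. exp (- s * t) * g t)"
        by (rule set_int_nn(1)) (use Gp \<phi>nn glap Lfin[OF s] in \<open>auto simp: g_def ennreal_mult_less_top\<close>)
    next
      show "AE s in lborel. 0 < s \<longrightarrow> laplace g s = s powr (1 - p) * h s"
      proof (rule AE_I2, intro impI)
        fix s :: real assume s: "s > 0"
        have "laplace g s = enn2real (ennreal (1 / Gamma p) * Lt s)" unfolding laplace_def
          by (subst set_int_nn(2)) (use Gp \<phi>nn glap Lfin[OF s] in \<open>auto simp: g_def ennreal_mult_less_top\<close>)
        also have "\<dots> = enn2real (Lt s) / Gamma p" using Gp by (simp add: enn2real_mult)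
        also have "\<dots> = s powr (1 - p) * h s"
          using s unfolding h_def by (simp add: powr_add[symmetric])
        finally show "laplace g s = s powr (1 - p) * h s" .
      qed
    qed
  have fx: "AE x in lborel. x > 0 \<longrightarrow> fX x = Gamma p / (x * B x) * g x"
    proof (rule AE_I2, intro impI)
      fix x :: real assume x: "x > 0"
      show "fX x = Gamma p / (x * B x) * g x"
        using x Gp Bpos[OF x] BB'[OF x] unfolding g_def \<phi>_def by simp
    qed
  show ?thesis using inv1 inv2 fx unfolding F1_def by blast
qed

end
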